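(* Let $A,B,C$ be real random variables on a common probability space with finite second moments, $\mathrm{Var}(B)>0$, $\mathbb{E}[A]\neq0$, $\mathbb{E}[C]\neq 0$, and set $R=\mathbb{E}[A]/\mathbb{E}[C]$. Let $n\ge1$ and let $(A_i,B_i,C_i)_{i=1,\dots,n}$ be i.i.d. copies of $(A,B,C)$. For $\alpha\in\mathbb{R}$ put $N_\alpha=\overline{A_n}+\alpha(\mathbb{E}[B]-\overline{B_n})$. Then the function $\alpha\mapsto\Phi(N_\alpha,\overline{C_n})$ has a unique minimizer on $\mathbb{R}$, namely $$\alpha_o'=\frac{\mathrm{Cov}(A,B)-R\,\mathrm{Cov}(B,C)}{\mathrm{Var}(B)}.$$
   Context: For a random variable $X$, $\overline{X_n}=\frac1n\sum_{i=1}^n X_i$ denotes the sample mean of the i.i.d. copies $X_1,\dots,X_n$. For real random variables $X,Z$ with finite second moments and $\mathbb{E}[Z]\neq0$, define the first-order (delta-method) approximation of the variance of the ratio $X/Z$: $$\Phi(X,Z)=\frac{\mathrm{Var}(X)}{\mathbb{E}[Z]^2}+\frac{\mathbb{E}[X]^2}{\mathbb{E}[Z]^4}\mathrm{Var}(Z)-2\frac{\mathbb{E}[X]}{\mathbb{E}[Z]^3}\mathrm{Cov}(X,Z).$$ The paper uses $\Phi(N_\alpha,\overline{C_n})$ as the variance of the CV/MC ratio estimator $N_\alpha/\overline{C_n}$ of $R$; $\mathbb{E}[B]$ is treated as a known constant. *)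

theory Defs
  imports "HOL-Probability.Probability"
begin

definition covariance :: "'a measure \<Rightarrow> ('a \<Rightarrow> real) \<Rightarrow> ('a \<Rightarrow> real) \<Rightarrow> real" where
  "covariance M X Y = (\<integral>x. (X x - (\<integral>y. X y \<partial>M)) * (Y x - (\<integral>y. Y y \<partial>M)) \<partial>M)"

definition var :: "'a measure \<Rightarrow> ('a \<Rightarrow> real) \<Rightarrow> real" where
  "var M X = (\<integral>x. (X x - (\<integral>y. X y \<partial>M))\<^sup>2 \<partial>M)"

text \<open>First-order (delta-method) approximation of the variance of the ratio X/Z.\<close>
definition Phi :: "'a measure \<Rightarrow> ('a \<Rightarrow> real) \<Rightarrow> ('a \<Rightarrow> real) \<Rightarrow> real" where
  "Phi M X Z =
     var M X / (\<integral>x. Z x \<partial>M)^2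
   + (\<integral>x. X x \<partial>M)^2 / (\<integral>x. Z x \<partial>M)^4 * var M Z
   - 2 * (\<integral>x. X x \<partial>M) / (\<integral>x. Z x \<partial>M)^3 * covariance M X Z"

definition sample_mean :: "nat \<Rightarrow> (nat \<Rightarrow> 'a \<Rightarrow> real) \<Rightarrow> 'a \<Rightarrow> real" where
  "sample_mean n X = (\<lambda>x. (\<Sum>i\<in>{1..n}. X i x) / real n)"

end

theory Submission
  imports Defs
begin


lemma (in prob_space) transfer_int:
  fixes V V0 :: "'a \<Rightarrow> real \<times> real \<times> real" and f :: "real \<times> real \<times> real \<Rightarrow> real"
  assumes "V \<in> borel_measurable M" "V0 \<in> borel_measurable M"
    "distr M borel V = distr M borel V0" "f \<in> borel_measurable borel"
  shows "integral\<^sup>L M (\<lambda>x. f (V x)) = integral\<^sup>L M (\<lambda>x. f (V0 x))"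
    and "integrable M (\<lambda>x. f (V x)) = integrable M (\<lambda>x. f (V0 x))"
proof -
  show "integral\<^sup>L M (\<lambda>x. f (V x)) = integral\<^sup>L M (\<lambda>x. f (V0 x))"
    using integral_distr[of V M borel f] integral_distr[of V0 M borel f] assms by simp
  show "integrable M (\<lambda>x. f (V x)) = integrable M (\<lambda>x. f (V0 x))"
    using integrable_distr_eq[of V M borel f] integrable_distr_eq[of V0 M borel f] assms by simp
qed

lemma prod_sq_integrable:
  fixes X Y :: "'a \<Rightarrow> real"
  assumes "X \<in> borel_measurable M" "Y \<in> borel_measurable M"
    "integrable M (\<lambda>x. (X x)\<^sup>2)" "integrable M (\<lambda>x. (Y x)\<^sup>2)"
  shows "integrable M (\<lambda>x. X x * Y x)"
proof (rule Bochner_Integration.integrable_bound[where f="\<lambda>x. (X x)\<^sup>2 + (Y x)\<^sup>2"])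
  show "integrable M (\<lambda>x. (X x)\<^sup>2 + (Y x)\<^sup>2)" using assms by simp
  show "(\<lambda>x. X x * Y x) \<in> borel_measurable M" using assms by measurable
  show "AE x in M. norm (X x * Y x) \<le> norm ((X x)\<^sup>2 + (Y x)\<^sup>2)"
  proof (rule AE_I2)
    fix x
    have "0 \<le> (\<bar>X x\<bar> - \<bar>Y x\<bar>)\<^sup>2" by simp
    then have "2 * (\<bar>X x\<bar> * \<bar>Y x\<bar>) \<le> (X x)\<^sup>2 + (Y x)\<^sup>2"
      by (simp add: power2_diff)
    moreover have "0 \<le> \<bar>X x\<bar> * \<bar>Y x\<bar>" by simp
    moreover have "\<bar>X x * Y x\<bar> = \<bar>X x\<bar> * \<bar>Y x\<bar>" by (rule abs_mult)
    ultimately have "\<bar>X x * Y x\<bar> \<le> (X x)\<^sup>2 + (Y x)\<^sup>2"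
      by linarith
    then show "norm (X x * Y x) \<le> norm ((X x)\<^sup>2 + (Y x)\<^sup>2)" by simp
  qed
qed

lemma shift_sq_integrable:
  fixes X :: "'a \<Rightarrow> real"
  assumes "finite_measure M" "X \<in> borel_measurable M" "integrable M (\<lambda>x. (X x)\<^sup>2)"
  shows "integrable M (\<lambda>x. (X x - c)\<^sup>2)"
proof -
  have "integrable M X" using finite_measure.square_integrable_imp_integrable[OF assms(1,2)] assms(3) by simp
  moreover have "integrable M (\<lambda>x. (2 * c) * X x)" using calculation by simp
  moreover have "integrable M (\<lambda>x. c\<^sup>2)" using finite_measure.integrable_const[OF assms(1)] .
  ultimately have "integrable M (\<lambda>x. (X x)\<^sup>2 - (2 * c) * X x + c\<^sup>2)"
    using assms(3) by simp
  moreover have "(\<lambda>x. (X x)\<^sup>2 - (2 * c) * X x + c\<^sup>2) = (\<lambda>x. (X x - c)\<^sup>2)"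
    by (simp add: power2_diff algebra_simps)
  ultimately show ?thesis by simp
qed

lemma (in prob_space) sm_facts:
  fixes V :: "nat \<Rightarrow> 'a \<Rightarrow> real \<times> real \<times> real" and W :: "'a \<Rightarrow> real \<times> real \<times> real"
    and g h :: "real \<times> real \<times> real \<Rightarrow> real"
  assumes VV: "\<forall>i\<in>{1..n}. V i \<in> borel_measurable M"
    and W: "W \<in> borel_measurable M"
    and ind: "indep_vars (\<lambda>_. borel) V {1..n}"
    and distt: "\<forall>i\<in>{1..n}. distr M borel (V i) = distr M borel W"
    and g: "g \<in> borel_measurable borel" and h: "h \<in> borel_measurable borel"
    and g2: "integrable M (\<lambda>x. (g (W x))\<^sup>2)" and h2: "integrable M (\<lambda>x. (h (W x))\<^sup>2)"
    and n: "n \<ge> 1"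
  shows "expectation (sample_mean n (\<lambda>i x. g (V i x))) = expectation (\<lambda>x. g (W x))"
    and "covariance M (sample_mean n (\<lambda>i x. g (V i x))) (sample_mean n (\<lambda>i x. h (V i x)))
         = covariance M (\<lambda>x. g (W x)) (\<lambda>x. h (W x)) / n"
proof -
  have V: "V i \<in> borel_measurable M" if "i \<in> {1..n}" for i using VV that by blast
  have dist: "distr M borel (V i) = distr M borel W" if "i \<in> {1..n}" for i using distt that by blast
  define mg where "mg = expectation (\<lambda>x. g (W x))"
  define mh where "mh = expectation (\<lambda>x. h (W x))"
  have fin: "finite_measure M" by unfold_locales
  have gm: "(\<lambda>x. g (V i x)) \<in> borel_measurable M" if "i \<in> {1..n}" for i
    using measurable_compose[OF V[OF that] g] by (simp add: comp_def)
  have hm: "(\<lambda>x. h (V i x)) \<in> borel_measurable M" if "i \<in> {1..n}" for i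
    using measurable_compose[OF V[OF that] h] by (simp add: comp_def)
  have g2i: "integrable M (\<lambda>x. (g (V i x))\<^sup>2)" if "i \<in> {1..n}" for i
    using transfer_int(2)[OF V[OF that] W dist[OF that], of "\<lambda>v. (g v)\<^sup>2"] g g2 by simp
  have h2i: "integrable M (\<lambda>x. (h (V i x))\<^sup>2)" if "i \<in> {1..n}" for i
    using transfer_int(2)[OF V[OF that] W dist[OF that], of "\<lambda>v. (h v)\<^sup>2"] h h2 by simp
  have gi: "integrable M (\<lambda>x. g (V i x))" if "i \<in> {1..n}" for i
    using square_integrable_imp_integrable[OF gm[OF that] g2i[OF that]] .
  have hi: "integrable M (\<lambda>x. h (V i x))" if "i \<in> {1..n}" for i
    using square_integrable_imp_integrable[OF hm[OF that] h2i[OF that]] .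
  have Eg: "expectation (\<lambda>x. g (V i x)) = mg" if "i \<in> {1..n}" for i
    unfolding mg_def using transfer_int(1)[OF V[OF that] W dist[OF that] g] .
  have Eh: "expectation (\<lambda>x. h (V i x)) = mh" if "i \<in> {1..n}" for i
    unfolding mh_def using transfer_int(1)[OF V[OF that] W dist[OF that] h] .
  have npos: "real n > 0" using n by simp
  have Esm: "expectation (sample_mean n (\<lambda>i x. g (V i x))) = mg"
    "expectation (sample_mean n (\<lambda>i x. h (V i x))) = mh"
    using npos gi hi Eg Eh by (simp_all add: sample_mean_def)
  then show "expectation (sample_mean n (\<lambda>i x. g (V i x))) = expectation (\<lambda>x. g (W x))"
    by (simp add: mg_def)
  have prodi: "integrable M (\<lambda>x. (g (V i x) - mg) * (h (V j x) - mh))"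
    if "i \<in> {1..n}" "j \<in> {1..n}" for i j
    using prod_sq_integrable[of "\<lambda>x. g (V i x) - mg" M "\<lambda>x. h (V j x) - mh"]
      shift_sq_integrable[OF fin gm[OF that(1)] g2i[OF that(1)]]
      shift_sq_integrable[OF fin hm[OF that(2)] h2i[OF that(2)]] gm[OF that(1)] hm[OF that(2)]
    by simp
  have cross: "expectation (\<lambda>x. (g (V i x) - mg) * (h (V j x) - mh))
      = (if i = j then covariance M (\<lambda>x. g (W x)) (\<lambda>x. h (W x)) else 0)"
    if ij: "i \<in> {1..n}" "j \<in> {1..n}" for i j
  proof (cases "i = j")
    case True
    then show ?thesis
      using transfer_int(1)[OF V[OF ij(1)] W dist[OF ij(1)], of "\<lambda>v. (g v - mg) * (h v - mh)"] g h
      by (simp add: covariance_def mg_def mh_def)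
  next
    case False
    define Y where "Y k = (if k = i then (\<lambda>v. g v - mg) else (\<lambda>v. h v - mh))" for k
    have sub: "indep_vars (\<lambda>_. borel) V {i, j}"
      using indep_vars_subset[OF ind] ij by auto
    have ind2: "indep_vars (\<lambda>_. borel) (\<lambda>k. Y k \<circ> V k) {i, j}"
      by (rule indep_vars_compose[OF sub]) (use g h in \<open>auto simp: Y_def\<close>)
    have int2: "integrable M (Y k \<circ> V k)" if "k \<in> {i, j}" for k
      using that ij gi hi by (auto simp: Y_def comp_def)
    have "expectation (\<lambda>\<omega>. \<Prod>k\<in>{i, j}. (Y k \<circ> V k) \<omega>) = (\<Prod>k\<in>{i, j}. expectation (Y k \<circ> V k))"
      by (rule indep_vars_lebesgue_integral[OF _ ind2 int2]) auto
    moreover have "expectation (Y i \<circ> V i) = 0"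
      using Eg[OF ij(1)] gi[OF ij(1)] by (simp add: Y_def comp_def prob_space)
    ultimately show ?thesis using False by (simp add: Y_def comp_def)
  qed
  have smg: "sample_mean n (\<lambda>i x. g (V i x)) x - mg = (\<Sum>i\<in>{1..n}. g (V i x) - mg) / n" for x
    using npos by (simp add: sample_mean_def sum_subtractf field_simps)
  have smh: "sample_mean n (\<lambda>i x. h (V i x)) x - mh = (\<Sum>i\<in>{1..n}. h (V i x) - mh) / n" for x
    using npos by (simp add: sample_mean_def sum_subtractf field_simps)
  have "covariance M (sample_mean n (\<lambda>i x. g (V i x))) (sample_mean n (\<lambda>i x. h (V i x)))
     = expectation (\<lambda>x. (\<Sum>i\<in>{1..n}. \<Sum>j\<in>{1..n}. (g (V i x) - mg) * (h (V j x) - mh)) / (real n)\<^sup>2)"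
    unfolding covariance_def Esm smg smh
    by (simp add: sum_product power2_eq_square)
  also have "\<dots> = (\<Sum>i\<in>{1..n}. \<Sum>j\<in>{1..n}. expectation (\<lambda>x. (g (V i x) - mg) * (h (V j x) - mh))) / (real n)\<^sup>2"
  proof -
    have "expectation (\<lambda>x. \<Sum>i\<in>{1..n}. \<Sum>j\<in>{1..n}. (g (V i x) - mg) * (h (V j x) - mh))
       = (\<Sum>i\<in>{1..n}. expectation (\<lambda>x. \<Sum>j\<in>{1..n}. (g (V i x) - mg) * (h (V j x) - mh)))"
      by (rule Bochner_Integration.integral_sum[where f="\<lambda>i x. \<Sum>j\<in>{1..n}. (g (V i x) - mg) * (h (V j x) - mh)"])
        (use prodi in auto)
    also have "\<dots> = (\<Sum>i\<in>{1..n}. \<Sum>j\<in>{1..n}. expectation (\<lambda>x. (g (V i x) - mg) * (h (V j x) - mh)))"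
      by (intro sum.cong refl Bochner_Integration.integral_sum) (use prodi in auto)
    finally show ?thesis by simp
  qed
  also have "\<dots> = (\<Sum>i\<in>{1..n}. covariance M (\<lambda>x. g (W x)) (\<lambda>x. h (W x))) / (real n)\<^sup>2"
  proof -
    have "(\<Sum>i\<in>{1..n}. \<Sum>j\<in>{1..n}. expectation (\<lambda>x. (g (V i x) - mg) * (h (V j x) - mh)))
      = (\<Sum>i\<in>{1..n}. \<Sum>j\<in>{1..n}. if i = j then covariance M (\<lambda>x. g (W x)) (\<lambda>x. h (W x)) else 0)"
      by (intro sum.cong refl cross) auto
    also have "\<dots> = (\<Sum>i\<in>{1..n}. covariance M (\<lambda>x. g (W x)) (\<lambda>x. h (W x)))"
      by (intro sum.cong refl) (simp add: sum.delta)
    finally show ?thesis by simp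
  qed
  also have "\<dots> = covariance M (\<lambda>x. g (W x)) (\<lambda>x. h (W x)) / n"
    using npos by (simp add: power2_eq_square)
  finally show "covariance M (sample_mean n (\<lambda>i x. g (V i x))) (sample_mean n (\<lambda>i x. h (V i x)))
         = covariance M (\<lambda>x. g (W x)) (\<lambda>x. h (W x)) / n" .
qed

lemma sq_add_integrable:
  fixes X Y :: "'a \<Rightarrow> real"
  assumes "X \<in> borel_measurable M" "Y \<in> borel_measurable M"
    "integrable M (\<lambda>x. (X x)\<^sup>2)" "integrable M (\<lambda>x. (Y x)\<^sup>2)"
  shows "integrable M (\<lambda>x. (X x + Y x)\<^sup>2)"
proof -
  have "integrable M (\<lambda>x. X x * Y x)" using prod_sq_integrable[OF assms] .
  then have "integrable M (\<lambda>x. (X x)\<^sup>2 + 2 * (X x * Y x) + (Y x)\<^sup>2)"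
    using assms by simp
  moreover have "(\<lambda>x. (X x)\<^sup>2 + 2 * (X x * Y x) + (Y x)\<^sup>2) = (\<lambda>x. (X x + Y x)\<^sup>2)"
    by (simp add: power2_sum algebra_simps)
  ultimately show ?thesis by simp
qed

lemma sq_scale_integrable:
  fixes X :: "'a \<Rightarrow> real"
  assumes "integrable M (\<lambda>x. (X x)\<^sup>2)"
  shows "integrable M (\<lambda>x. (c * X x)\<^sup>2)"
  using integrable_mult_right[OF assms, of "c\<^sup>2"] by (simp add: power_mult_distrib)

lemma (in prob_space) cov_lin:
  fixes A B C D :: "'a \<Rightarrow> real"
  assumes m: "A \<in> borel_measurable M" "B \<in> borel_measurable M" "C \<in> borel_measurable M" "D \<in> borel_measurable M"
    and s: "integrable M (\<lambda>x. (A x)\<^sup>2)" "integrable M (\<lambda>x. (B x)\<^sup>2)"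
      "integrable M (\<lambda>x. (C x)\<^sup>2)" "integrable M (\<lambda>x. (D x)\<^sup>2)"
  shows "covariance M (\<lambda>x. A x + t * (B x - expectation B)) (\<lambda>x. C x + u * (D x - expectation D))
     = covariance M A C + u * covariance M A D + t * covariance M B C + t * u * covariance M B D"
proof -
  have fin: "finite_measure M" by unfold_locales
  define a where "a = expectation A"
  define b where "b = expectation B"
  define c where "c = expectation C"
  define d where "d = expectation D"
  have Ai: "integrable M A" using square_integrable_imp_integrable[OF m(1) s(1)] .
  have Bi: "integrable M B" using square_integrable_imp_integrable[OF m(2) s(2)] .
  have Ci: "integrable M C" using square_integrable_imp_integrable[OF m(3) s(3)] .
  have Di: "integrable M D" using square_integrable_imp_integrable[OF m(4) s(4)] .
  have E1: "expectation (\<lambda>x. A x + t * (B x - b)) = a"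
    using Ai Bi by (simp add: a_def b_def prob_space)
  have E2: "expectation (\<lambda>x. C x + u * (D x - d)) = c"
    using Ci Di by (simp add: c_def d_def prob_space)
  have P: "integrable M (\<lambda>x. (X x - e) * (Y x - f))"
    if "X \<in> borel_measurable M" "Y \<in> borel_measurable M"
       "integrable M (\<lambda>x. (X x)\<^sup>2)" "integrable M (\<lambda>x. (Y x)\<^sup>2)" for X Y :: "'a \<Rightarrow> real" and e f
    using prod_sq_integrable[of "\<lambda>x. X x - e" M "\<lambda>x. Y x - f"]
      shift_sq_integrable[OF fin that(1,3)] shift_sq_integrable[OF fin that(2,4)] that by simp
  have PAC: "integrable M (\<lambda>x. (A x - a) * (C x - c))" by (rule P) (use m s in auto)
  have PAD: "integrable M (\<lambda>x. (A x - a) * (D x - d))" by (rule P) (use m s in auto)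
  have PBC: "integrable M (\<lambda>x. (B x - b) * (C x - c))" by (rule P) (use m s in auto)
  have PBD: "integrable M (\<lambda>x. (B x - b) * (D x - d))" by (rule P) (use m s in auto)
  have "covariance M (\<lambda>x. A x + t * (B x - b)) (\<lambda>x. C x + u * (D x - d))
     = expectation (\<lambda>x. (A x - a) * (C x - c) + u * ((A x - a) * (D x - d))
          + t * ((B x - b) * (C x - c)) + (t * u) * ((B x - b) * (D x - d)))"
    unfolding covariance_def E1 E2 by (rule arg_cong[where f="integral\<^sup>L M"]) (auto simp: algebra_simps)
  also have "\<dots> = covariance M A C + u * covariance M A D + t * covariance M B C + t * u * covariance M B D"
    using PAC PAD PBC PBD by (simp add: covariance_def a_def b_def c_def d_def)
  finally show ?thesis by (simp add: b_def d_def)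
qed

lemma covariance_sym: "covariance M X Y = covariance M Y X"
  unfolding covariance_def by (simp add: mult.commute)

lemma var_cov: "var M X = covariance M X X"
  unfolding covariance_def var_def by (simp add: power2_eq_square)

lemma alg:
  fixes VA VB VC CAB CAC CBC a c n :: real
  assumes "VB > 0" "c \<noteq> 0" "n > 0"
  defines "F \<equiv> \<lambda>\<beta>. (VA + (-\<beta>) * CAB + (-\<beta>) * CAB + (-\<beta>) * (-\<beta>) * VB) / n / c\<^sup>2
      + a\<^sup>2 / c ^ 4 * (VC / n) - 2 * a / c ^ 3 * ((CAC + (-\<beta>) * CBC) / n)"
  shows "F \<beta> = F ((CAB - a / c * CBC) / VB) + VB / (n * c\<^sup>2) * (\<beta> - (CAB - a / c * CBC) / VB)\<^sup>2"
  using assms unfolding F_def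
  by (simp add: field_simps power2_eq_square power3_eq_cube)

lemma mt_gen:
  fixes M :: "'a measure"
    and A B C :: "'a \<Rightarrow> real"
    and As Bs Cs :: "nat \<Rightarrow> 'a \<Rightarrow> real"
    and n :: nat
  assumes "prob_space M"
    and "A \<in> borel_measurable M" and "B \<in> borel_measurable M" and "C \<in> borel_measurable M"
    and "integrable M (\<lambda>x. (A x)\<^sup>2)" and "integrable M (\<lambda>x. (B x)\<^sup>2)"
    and "integrable M (\<lambda>x. (C x)\<^sup>2)"
    and "var M B > 0"
    and "(\<integral>x. A x \<partial>M) \<noteq> 0" and "(\<integral>x. C x \<partial>M) \<noteq> 0"
    and "n \<ge> 1"
    and "\<And>i. i \<in> {1..n} \<Longrightarrow> As i \<in> borel_measurable M"
    and "\<And>i. i \<in> {1..n} \<Longrightarrow> Bs i \<in> borel_measurable M"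
    and "\<And>i. i \<in> {1..n} \<Longrightarrow> Cs i \<in> borel_measurable M"
    and "prob_space.indep_vars M (\<lambda>_. borel) (\<lambda>i x. (As i x, Bs i x, Cs i x)) {1..n}"
    and "\<And>i. i \<in> {1..n} \<Longrightarrow>
           distr M borel (\<lambda>x. (As i x, Bs i x, Cs i x)) = distr M borel (\<lambda>x. (A x, B x, C x))"
  shows "let R = (\<integral>x. A x \<partial>M) / (\<integral>x. C x \<partial>M);
             N = (\<lambda>\<alpha> x. sample_mean n As x + \<alpha> * ((\<integral>y. B y \<partial>M) - sample_mean n Bs x));
             f = (\<lambda>\<alpha>. Phi M (N \<alpha>) (sample_mean n Cs));
             \<alpha>o = (covariance M A B - R * covariance M B C) / var M B
         in (\<forall>\<beta>. f \<alpha>o \<le> f \<beta>) \<and> (\<forall>\<alpha>. (\<forall>\<beta>. f \<alpha> \<le> f \<beta>) \<longrightarrow> \<alpha> = \<alpha>o)"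
proof -
  interpret prob_space M by fact
  note Am = assms(2) and Bm = assms(3) and Cm = assms(4)
  define a where "a = expectation A"
  define b where "b = expectation B"
  define c where "c = expectation C"
  define V where "V = (\<lambda>i x. (As i x, Bs i x, Cs i x))"
  define V0 where "V0 = (\<lambda>x. (A x, B x, C x))"
  define gA where "gA = (\<lambda>\<alpha> (v::real\<times>real\<times>real). fst v + \<alpha> * (b - fst (snd v)))"
  define hC where "hC = (\<lambda>v::real\<times>real\<times>real. snd (snd v))"
  have fin: "finite_measure M" by unfold_locales
  have Ai: "integrable M A" using square_integrable_imp_integrable[OF Am assms(5)] .
  have Bi: "integrable M B" using square_integrable_imp_integrable[OF Bm assms(6)] .
  have Ci: "integrable M C" using square_integrable_imp_integrable[OF Cm assms(7)] .
  have npos: "real n > 0" using assms(11) by simp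
  have Vm: "V i \<in> borel_measurable M" if "i \<in> {1..n}" for i
    unfolding V_def using assms(12-14)[OF that] by measurable
  have V0m: "V0 \<in> borel_measurable M" unfolding V0_def using Am Bm Cm by measurable
  have gAm: "gA \<alpha> \<in> borel_measurable borel" for \<alpha> unfolding gA_def
    by (intro borel_measurable_continuous_onI continuous_intros)
  have hCm: "hC \<in> borel_measurable borel" unfolding hC_def
    by (intro borel_measurable_continuous_onI continuous_intros)
  have gA0: "gA \<alpha> (V0 x) = A x + (- \<alpha>) * (B x - b)" for \<alpha> x
    by (simp add: gA_def V0_def algebra_simps)
  have hC0: "hC (V0 x) = C x" for x by (simp add: hC_def V0_def)
  have gA2: "integrable M (\<lambda>x. (gA \<alpha> (V0 x))\<^sup>2)" for \<alpha>
    unfolding gA0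
    by (intro sq_add_integrable sq_scale_integrable shift_sq_integrable[OF fin] assms(5,6)) (use Am Bm in auto)
  have hC2: "integrable M (\<lambda>x. (hC (V0 x))\<^sup>2)" unfolding hC0 by fact
  have ind: "indep_vars (\<lambda>_. borel) V {1..n}" using assms(15) unfolding V_def .
  have dist: "distr M borel (V i) = distr M borel V0" if "i \<in> {1..n}" for i
    unfolding V_def V0_def using assms(16)[OF that] .
  have VmA: "\<forall>i\<in>{1..n}. V i \<in> borel_measurable M" using Vm by blast
  have distA: "\<forall>i\<in>{1..n}. distr M borel (V i) = distr M borel V0" using dist by blast
  note SM = sm_facts[OF VmA V0m ind distA]
  have Neq: "(\<lambda>x. sample_mean n As x + \<alpha> * (b - sample_mean n Bs x)) = sample_mean n (\<lambda>i x. gA \<alpha> (V i x))" for \<alpha>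
    using npos by (auto simp: sample_mean_def gA_def V_def sum.distrib sum_subtractf sum_distrib_left field_simps)
  have Ceq: "sample_mean n Cs = sample_mean n (\<lambda>i x. hC (V i x))"
    by (simp add: hC_def V_def)
  define VA where "VA = covariance M A A"
  define VB where "VB = covariance M B B"
  define VC where "VC = covariance M C C"
  define CAB where "CAB = covariance M A B"
  define CAC where "CAC = covariance M A C"
  define CBC where "CBC = covariance M B C"
  define F where "F = (\<lambda>\<beta>. (VA + (-\<beta>) * CAB + (-\<beta>) * CAB + (-\<beta>) * (-\<beta>) * VB) / real n / c\<^sup>2
      + a\<^sup>2 / c ^ 4 * (VC / real n) - 2 * a / c ^ 3 * ((CAC + (-\<beta>) * CBC) / real n))"
  have fval: "Phi M (\<lambda>x. sample_mean n As x + \<alpha> * (expectation B - sample_mean n Bs x)) (sample_mean n Cs) = F \<alpha>"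
    for \<alpha>
  proof -
    let ?N = "sample_mean n (\<lambda>i x. gA \<alpha> (V i x))"
    let ?C = "sample_mean n (\<lambda>i x. hC (V i x))"
    have EN: "expectation ?N = a"
      using SM(1)[OF gAm hCm gA2 hC2 assms(11), of \<alpha>] Ai Bi
      by (simp add: gA0 a_def b_def prob_space)
    have EC: "expectation ?C = c"
      using SM(1)[OF hCm hCm hC2 hC2 assms(11)] by (simp add: hC0 c_def)
    have VN: "var M ?N = (VA + (-\<alpha>) * CAB + (-\<alpha>) * CAB + (-\<alpha>) * (-\<alpha>) * VB) / real n"
      using SM(2)[OF gAm gAm gA2 gA2 assms(11), of \<alpha> \<alpha>]
        cov_lin[OF Am Bm Am Bm assms(5,6,5,6), of "-\<alpha>" "-\<alpha>"]
      by (simp add: var_cov gA0 VA_def VB_def CAB_def covariance_sym[of M B A] b_def)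
    have CNC: "covariance M ?N ?C = (CAC + (-\<alpha>) * CBC) / real n"
      using SM(2)[OF gAm hCm gA2 hC2 assms(11), of \<alpha>]
        cov_lin[OF Am Bm Cm Bm assms(5,6,7,6), of "-\<alpha>" 0]
      by (simp add: gA0 hC0 CAC_def CBC_def b_def)
    have VCC: "var M ?C = VC / real n"
      using SM(2)[OF hCm hCm hC2 hC2 assms(11)]
      by (simp add: var_cov hC0 VC_def)
    have "Phi M ?N ?C = F \<alpha>"
      unfolding Phi_def EN EC VN CNC VCC F_def by simp
    then show ?thesis using Neq[of \<alpha>] Ceq by (simp add: b_def)
  qed
  have VBpos: "VB > 0" using assms(8) by (simp add: VB_def var_cov)
  have cnz: "c \<noteq> 0" using assms(10) by (simp add: c_def)
  define ao where "ao = (CAB - a / c * CBC) / VB"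
  have key: "F \<beta> = F ao + VB / (real n * c\<^sup>2) * (\<beta> - ao)\<^sup>2" for \<beta>
    unfolding F_def ao_def by (rule alg[OF VBpos cnz npos])
  have pos: "VB / (real n * c\<^sup>2) > 0" using VBpos cnz npos by simp
  have min: "F ao \<le> F \<beta>" for \<beta>
  proof -
    have "0 \<le> VB / (real n * c\<^sup>2) * (\<beta> - ao)\<^sup>2"
      using pos by (intro mult_nonneg_nonneg) auto
    then show ?thesis using key[of \<beta>] by linarith
  qed
  have uniq: "\<alpha> = ao" if "\<forall>\<beta>. F \<alpha> \<le> F \<beta>" for \<alpha>
  proof -
    have "F \<alpha> \<le> F ao" using that by simp
    then have "VB / (real n * c\<^sup>2) * (\<alpha> - ao)\<^sup>2 \<le> 0" using key[of \<alpha>] by simp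
    then have "(\<alpha> - ao)\<^sup>2 \<le> 0" using pos
      by (metis mult_le_0_iff not_less zero_le_power2 order_antisym)
    then show ?thesis by simp
  qed
  have aoeq: "(covariance M A B - (expectation A / expectation C) * covariance M B C) / var M B = ao"
    by (simp add: ao_def CAB_def CBC_def a_def c_def VB_def var_cov)
  show ?thesis
    unfolding Let_def fval aoeq using min uniq by blast
qed

theorem mainTheorem3:
  fixes M :: "'a measure"
    and A B C :: "'a \<Rightarrow> real"
    and As Bs Cs :: "nat \<Rightarrow> 'a \<Rightarrow> real"
    and n :: nat
  assumes "prob_space M"
    and "A \<in> borel_measurable M" and "B \<in> borel_measurable M" and "C \<in> borel_measurable M"
    and "integrable M (\<lambda>x. (A x)\<^sup>2)" and "integrable M (\<lambda>x. (B x)\<^sup>2)"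
    and "integrable M (\<lambda>x. (C x)\<^sup>2)"
    and "var M B > 0"
    and "(\<integral>x. A x \<partial>M) \<noteq> 0" and "(\<integral>x. C x \<partial>M) \<noteq> 0"
    and "n \<ge> 1"
    and "\<And>i. i \<in> {1..n} \<Longrightarrow> As i \<in> borel_measurable M"
    and "\<And>i. i \<in> {1..n} \<Longrightarrow> Bs i \<in> borel_measurable M"
    and "\<And>i. i \<in> {1..n} \<Longrightarrow> Cs i \<in> borel_measurable M"
    and "prob_space.indep_vars M (\<lambda>_. borel) (\<lambda>i x. (As i x, Bs i x, Cs i x)) {1..n}"
    and "\<And>i. i \<in> {1..n} \<Longrightarrow>
           distr M borel (\<lambda>x. (As i x, Bs i x, Cs i x)) = distr M borel (\<lambda>x. (A x, B x, C x))"
  shows "let R = (\<integral>x. A x \<partial>M) / (\<integral>x. C x \<partial>M);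
             N = (\<lambda>\<alpha> x. sample_mean n As x + \<alpha> * ((\<integral>y. B y \<partial>M) - sample_mean n Bs x));
             f = (\<lambda>\<alpha>. Phi M (N \<alpha>) (sample_mean n Cs));
             \<alpha>o = (covariance M A B - R * covariance M B C) / var M B
         in (\<forall>\<beta>. f \<alpha>o \<le> f \<beta>) \<and> (\<forall>\<alpha>. (\<forall>\<beta>. f \<alpha> \<le> f \<beta>) \<longrightarrow> \<alpha> = \<alpha>o)"
    using assms by (rule mt_gen)

end
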